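(* Let $F$ be a partially colored forest. Alice can win the $3$-Reduced Coloring Game on $\mathcal{R}'(F)$ if every trunk $R'$ of $\mathcal{R}'(F)$ satisfies one of: (i) $R'$ has exactly one colored vertex and contains no edge of $E_{>>2}(\mathcal{R}'(F))$; or (ii) $R'$ has no colored vertices and there exists a vertex $v\in V(R')$ that covers $E_{>>2}(R')$.
   Context: A partial coloring assigns to some vertices colors from a set of $3$ colors so that adjacent colored vertices differ; a color is legal for an uncolored vertex $v$ if no neighbor of $v$ has it. The $k$-Reduced Coloring Game ($k$-RCG) on a partially colored graph: Bob and Alice alternate turns, Bob first, each coloring an uncolored vertex with a legal color from a $k$-set of colors; Bob may pass; Alice may only color vertices of degree at least $k$; Bob wins if at some point an uncolored vertex has no legal color; Alice wins once every vertex of degree at least $k$ is colored. For a partially colored forest $F$, a trunk of $F$ is a maximal connected subgraph $R$ such that every colored vertex of $R$ is a leaf of $R$; $\mathcal{R}(F)$ is the partially colored forest formed by the disjoint union of all trunks of $F$ (a colored vertex lying in several trunks appears as a separate colored copy in each). For a graph $G$, $E_{>2}(G)$ is the set of edges $xy$ with $d_G(x)>2$ or $d_G(y)>2$, and $E_{>>2}(G)$ the set of edges $xy$ with $d_G(x)>2$ and $d_G(y)>2$. The reduced graph is $\mathcal{R}'(F)=\mathcal{R}(F)-\{xy: xy\notin E_{>2}(\mathcal{R}(F))\}$; its trunks are defined as for any partially colored forest. A vertex $v$ covers a set of edges if $v$ is an endpoint of every edge in the set. *)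

theory Defs
  imports Main
begin

text \<open>Graphs: vertex set V, edges as 2-element sets, partial colouring c (None = uncoloured).\<close>

definition deg :: "'v set set \<Rightarrow> 'v \<Rightarrow> nat" where
  "deg E x = card {y. {x, y} \<in> E \<and> y \<noteq> x}"

definition simple_graph :: "'v set \<Rightarrow> 'v set set \<Rightarrow> bool" where
  "simple_graph V E \<longleftrightarrow> finite V \<and> (\<forall>e\<in>E. \<exists>x y. e = {x, y} \<and> x \<noteq> y \<and> x \<in> V \<and> y \<in> V)"

definition has_cycle :: "'v set \<Rightarrow> 'v set set \<Rightarrow> bool" where
  "has_cycle V E \<longleftrightarrow> (\<exists>xs. length xs \<ge> 3 \<and> distinct xs \<and> set xs \<subseteq> V \<and>
      (\<forall>i < length xs. {xs ! i, xs ! ((i + 1) mod length xs)} \<in> E))"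

definition forest :: "'v set \<Rightarrow> 'v set set \<Rightarrow> bool" where
  "forest V E \<longleftrightarrow> simple_graph V E \<and> \<not> has_cycle V E"

definition partial_coloring :: "'v set \<Rightarrow> 'v set set \<Rightarrow> ('v \<Rightarrow> nat option) \<Rightarrow> bool" where
  "partial_coloring V E c \<longleftrightarrow> (\<forall>x\<in>V. \<forall>a. c x = Some a \<longrightarrow> a < 3) \<and>
     (\<forall>x y. {x, y} \<in> E \<and> x \<noteq> y \<and> c x \<noteq> None \<longrightarrow> c x \<noteq> c y)"

definition pc_forest :: "'v set \<Rightarrow> 'v set set \<Rightarrow> ('v \<Rightarrow> nat option) \<Rightarrow> bool" where
  "pc_forest V E c \<longleftrightarrow> forest V E \<and> partial_coloring V E c"

definition is_subgraph :: "'v set \<Rightarrow> 'v set set \<Rightarrow> 'v set \<Rightarrow> 'v set set \<Rightarrow> bool" where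
  "is_subgraph V E W D \<longleftrightarrow> W \<subseteq> V \<and> D \<subseteq> E \<and> (\<forall>e\<in>D. e \<subseteq> W)"

definition connected_graph :: "'v set \<Rightarrow> 'v set set \<Rightarrow> bool" where
  "connected_graph W D \<longleftrightarrow> W \<noteq> {} \<and>
     (\<forall>x\<in>W. \<forall>y\<in>W. (x, y) \<in> {(u, v). {u, v} \<in> D}\<^sup>*)"

definition trunk_candidate :: "'v set \<Rightarrow> 'v set set \<Rightarrow> ('v \<Rightarrow> nat option) \<Rightarrow> 'v set \<Rightarrow> 'v set set \<Rightarrow> bool" where
  "trunk_candidate V E c W D \<longleftrightarrow> is_subgraph V E W D \<and> connected_graph W D \<and>
     (\<forall>x\<in>W. c x \<noteq> None \<longrightarrow> deg D x = 1)"

definition is_trunk :: "'v set \<Rightarrow> 'v set set \<Rightarrow> ('v \<Rightarrow> nat option) \<Rightarrow> 'v set \<Rightarrow> 'v set set \<Rightarrow> bool" where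
  "is_trunk V E c W D \<longleftrightarrow> trunk_candidate V E c W D \<and>
     (\<forall>W' D'. trunk_candidate V E c W' D' \<and> W \<subseteq> W' \<and> D \<subseteq> D' \<longrightarrow> W' = W \<and> D' = D)"

definition trunks :: "'v set \<Rightarrow> 'v set set \<Rightarrow> ('v \<Rightarrow> nat option) \<Rightarrow> ('v set \<times> 'v set set) set" where
  "trunks V E c = {(W, D). is_trunk V E c W D}"

text \<open>R(F): disjoint union of the trunks; a vertex of R(F) is a pair (trunk, vertex).\<close>
definition R_V :: "'v set \<Rightarrow> 'v set set \<Rightarrow> ('v \<Rightarrow> nat option) \<Rightarrow> (('v set \<times> 'v set set) \<times> 'v) set" where
  "R_V V E c = {(T, x) | T x. T \<in> trunks V E c \<and> x \<in> fst T}"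

definition R_E :: "'v set \<Rightarrow> 'v set set \<Rightarrow> ('v \<Rightarrow> nat option) \<Rightarrow> (('v set \<times> 'v set set) \<times> 'v) set set" where
  "R_E V E c = {{(T, x), (T, y)} | T x y. T \<in> trunks V E c \<and> {x, y} \<in> snd T}"

definition R_col :: "('v \<Rightarrow> nat option) \<Rightarrow> (('v set \<times> 'v set set) \<times> 'v) \<Rightarrow> nat option" where
  "R_col c = (\<lambda>(T, x). c x)"

definition E_gt2 :: "'v set set \<Rightarrow> 'v set set" where
  "E_gt2 E = {e \<in> E. \<exists>x\<in>e. deg E x > 2}"

definition E_gtgt2 :: "'v set set \<Rightarrow> 'v set set" where
  "E_gtgt2 E = {e \<in> E. \<forall>x\<in>e. deg E x > 2}"

text \<open>R'(F) = R(F) minus the edges not in E_{>2}(R(F)); same vertices and colouring.\<close>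
definition R'_E :: "'v set \<Rightarrow> 'v set set \<Rightarrow> ('v \<Rightarrow> nat option) \<Rightarrow> (('v set \<times> 'v set set) \<times> 'v) set set" where
  "R'_E V E c = E_gt2 (R_E V E c)"

definition legal :: "nat \<Rightarrow> 'v set set \<Rightarrow> ('v \<Rightarrow> nat option) \<Rightarrow> 'v \<Rightarrow> nat \<Rightarrow> bool" where
  "legal k E c v a \<longleftrightarrow> a < k \<and> (\<forall>u. {u, v} \<in> E \<and> u \<noteq> v \<longrightarrow> c u \<noteq> Some a)"

definition blocked :: "nat \<Rightarrow> 'v set \<Rightarrow> 'v set set \<Rightarrow> ('v \<Rightarrow> nat option) \<Rightarrow> bool" where
  "blocked k V E c \<longleftrightarrow> (\<exists>v\<in>V. c v = None \<and> (\<forall>a. \<not> legal k E c v a))"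

definition alice_done :: "nat \<Rightarrow> 'v set \<Rightarrow> 'v set set \<Rightarrow> ('v \<Rightarrow> nat option) \<Rightarrow> bool" where
  "alice_done k V E c \<longleftrightarrow> (\<forall>v\<in>V. deg E v \<ge> k \<longrightarrow> c v \<noteq> None)"

text \<open>win_bob: positions with Bob to move from which Alice has a winning strategy;
  win_alice: positions with Alice to move from which Alice has a winning strategy.\<close>
inductive win_bob :: "nat \<Rightarrow> 'v set \<Rightarrow> 'v set set \<Rightarrow> ('v \<Rightarrow> nat option) \<Rightarrow> bool"
  and win_alice :: "nat \<Rightarrow> 'v set \<Rightarrow> 'v set set \<Rightarrow> ('v \<Rightarrow> nat option) \<Rightarrow> bool"
  for k V E where
  bob_done: "\<not> blocked k V E c \<Longrightarrow> alice_done k V E c \<Longrightarrow> win_bob k V E c"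
| bob_move: "\<not> blocked k V E c \<Longrightarrow> win_alice k V E c \<Longrightarrow>
     (\<forall>v\<in>V. \<forall>a. c v = None \<and> legal k E c v a \<longrightarrow> win_alice k V E (c(v := Some a))) \<Longrightarrow>
     win_bob k V E c"
| alice_fin: "\<not> blocked k V E c \<Longrightarrow> alice_done k V E c \<Longrightarrow> win_alice k V E c"
| alice_move: "\<not> blocked k V E c \<Longrightarrow> v \<in> V \<Longrightarrow> c v = None \<Longrightarrow> deg E v \<ge> k \<Longrightarrow>
     legal k E c v a \<Longrightarrow> win_bob k V E (c(v := Some a)) \<Longrightarrow> win_alice k V E c"

definition alice_wins_RCG :: "nat \<Rightarrow> 'v set \<Rightarrow> 'v set set \<Rightarrow> ('v \<Rightarrow> nat option) \<Rightarrow> bool" where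
  "alice_wins_RCG k V E c \<longleftrightarrow> win_bob k V E c"

end

theory Submission
  imports Defs
begin


definition nb :: "'v set set \<Rightarrow> 'v \<Rightarrow> 'v set" where
  "nb E x = {y. {x,y}\<in>E \<and> y\<noteq>x}"

lemma deg_nb: "deg E x = card (nb E x)" by (simp add: deg_def nb_def)

lemma legal_nb: "legal k E c v a \<longleftrightarrow> a<k \<and> (\<forall>u\<in>nb E v. c u \<noteq> Some a)"
  by (auto simp: legal_def nb_def insert_commute)

lemma exists_legal:
  assumes "\<forall>u\<in>nb E v. c u = None \<or> c u = Some a1 \<or> c u = Some a2"
  shows "\<exists>a. legal 3 E c v a"
proof -
  have "\<exists>a::nat. a<3 \<and> a\<noteq>a1 \<and> a\<noteq>a2" by presburger
  then obtain a::nat where "a<3" "a\<noteq>a1" "a\<noteq>a2" by blast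
  have "legal 3 E c v a" unfolding legal_nb
  proof (intro conjI ballI)
    show "a < 3" by fact
  next
    fix u assume "u \<in> nb E v"
    then have "c u = None \<or> c u = Some a1 \<or> c u = Some a2" using assms by blast
    then show "c u \<noteq> Some a" using \<open>a\<noteq>a1\<close> \<open>a\<noteq>a2\<close> by auto
  qed
  then show ?thesis by blast
qed

lemma low_two: assumes "finite A" "card A \<le> 2" shows "\<exists>p q. A \<subseteq> {p,q}"
proof (cases "A = {}")
  case True then show ?thesis by auto
next
  case False
  then obtain p where p: "p \<in> A" by auto
  have "card (A - {p}) \<le> 1" using assms p by auto
  then have "card (A - {p}) = 0 \<or> card (A - {p}) = 1" by arith
  then have "A - {p} = {} \<or> (\<exists>q. A - {p} = {q})"
  proof
    assume "card (A - {p}) = 0" then show ?thesis using assms by simp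
  next
    assume "card (A - {p}) = 1"
    then obtain q where "A - {p} = {q}" by (rule card_1_singletonE)
    then show ?thesis by blast
  qed
  then show ?thesis by blast
qed


definition InvAt :: "'v set set \<Rightarrow> ('v \<Rightarrow> 'v option) \<Rightarrow> ('v \<Rightarrow> nat option) \<Rightarrow> 'v \<Rightarrow> bool" where
  "InvAt E par c u \<longleftrightarrow> (c u = None \<longrightarrow> 3 \<le> deg E u \<longrightarrow>
     (\<forall>y\<in>nb E u. \<forall>z\<in>nb E u. c y \<noteq> None \<longrightarrow> c z \<noteq> None \<longrightarrow> c y = c z) \<and>
     (\<forall>y\<in>nb E u. c y \<noteq> None \<longrightarrow> par u \<noteq> Some y \<longrightarrow> (\<exists>p. par u = Some p \<and> c p \<noteq> None)))"

definition Inv :: "'v set set \<Rightarrow> ('v \<Rightarrow> 'v option) \<Rightarrow> ('v \<Rightarrow> nat option) \<Rightarrow> bool" where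
  "Inv E par c \<longleftrightarrow> (\<forall>u. InvAt E par c u)"

definition unc :: "'v set \<Rightarrow> ('v \<Rightarrow> nat option) \<Rightarrow> nat" where
  "unc V c = card {v\<in>V. c v = None}"

lemma nb_sym: "y \<in> nb E x \<longleftrightarrow> x \<in> nb E y"
  by (auto simp: nb_def insert_commute)

locale gm =
  fixes V :: "'v set" and E :: "'v set set" and par :: "'v \<Rightarrow> 'v option"
  assumes finV: "finite V"
    and edges: "\<forall>e\<in>E. \<exists>x y. e = {x,y} \<and> x\<noteq>y \<and> x\<in>V \<and> y\<in>V"
    and A1: "\<And>x y. y \<in> nb E x \<Longrightarrow> par x = Some y \<or> par y = Some x"
    and A1': "\<And>x y. par x = Some y \<Longrightarrow> y \<in> nb E x"
    and A2: "\<And>u g. par u = Some g \<Longrightarrow> 3 \<le> deg E u \<Longrightarrow> 3 \<le> deg E g \<Longrightarrow> par g = None"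
begin

lemma nb_sub: "nb E x \<subseteq> V"
proof
  fix y assume "y \<in> nb E x"
  then have "{x,y} \<in> E" by (simp add: nb_def)
  then obtain a b where eq: "{x,y} = {a,b}" and ab: "a \<in> V" "b \<in> V" using edges by blast
  have "y \<in> {a,b}" by (subst eq[symmetric]) simp
  then show "y \<in> V" using ab by blast
qed

lemma nb_fin: "finite (nb E x)" by (rule finite_subset[OF nb_sub finV])

lemma par_ne: assumes "par x = Some y" shows "x \<noteq> y"
proof -
  have "y \<in> nb E x" by (rule A1'[OF assms])
  then show ?thesis unfolding nb_def by blast
qed

lemma par_V: assumes "par x = Some y" shows "y \<in> V"
  by (rule subsetD[OF nb_sub A1'[OF assms]])

lemma nb_V: assumes "y \<in> nb E x" shows "x \<in> V"
proof -
  have "x \<in> nb E y" using assms nb_sym by metis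
  then show ?thesis by (rule subsetD[OF nb_sub])
qed

lemma adj_new: assumes "z \<in> nb E u" "par z \<noteq> Some u" shows "par u = Some z"
  using A1[OF assms(1)] assms(2) by simp

lemma notblocked:
  assumes "\<And>v. c v = None \<Longrightarrow> 3 \<le> deg E v \<Longrightarrow> \<exists>a1 a2. \<forall>u\<in>nb E v. c u = None \<or> c u = Some a1 \<or> c u = Some a2"
  shows "\<not> blocked 3 V E c"
proof -
  have "\<exists>a. legal 3 E c v a" if "c v = None" for v
  proof (cases "3 \<le> deg E v")
    case True
    then show ?thesis using assms[OF that True] exists_legal by metis
  next
    case False
    then have "card (nb E v) \<le> 2" by (simp add: deg_nb)
    then obtain p q where pq: "nb E v \<subseteq> {p,q}" using low_two nb_fin by metis
    have "\<forall>u\<in>nb E v. c u = None \<or> c u = Some (the (c p)) \<or> c u = Some (the (c q))"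
      using pq by auto
    then show ?thesis using exists_legal by metis
  qed
  then show ?thesis unfolding blocked_def by blast
qed

lemma InvD1: "Inv E par c \<Longrightarrow> c u = None \<Longrightarrow> 3 \<le> deg E u \<Longrightarrow> y\<in>nb E u \<Longrightarrow> z\<in>nb E u \<Longrightarrow>
   c y \<noteq> None \<Longrightarrow> c z \<noteq> None \<Longrightarrow> c y = c z"
  unfolding Inv_def InvAt_def by blast

lemma InvD2: "Inv E par c \<Longrightarrow> c u = None \<Longrightarrow> 3 \<le> deg E u \<Longrightarrow> y\<in>nb E u \<Longrightarrow>
   c y \<noteq> None \<Longrightarrow> par u \<noteq> Some y \<Longrightarrow> \<exists>p. par u = Some p \<and> c p \<noteq> None"
  unfolding Inv_def InvAt_def by blast

lemma Inv_one:
  assumes "Inv E par c" "c v = None" "3 \<le> deg E v"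
  shows "\<exists>b. \<forall>u\<in>nb E v. c u = None \<or> c u = Some b"
proof (cases "\<exists>y\<in>nb E v. c y \<noteq> None")
  case True
  then obtain y where y: "y \<in> nb E v" "c y \<noteq> None" by blast
  have "\<forall>u\<in>nb E v. c u = None \<or> c u = c y"
    using InvD1[OF assms _ y(1)] y(2) by blast
  then show ?thesis using y(2) by (metis option.collapse)
next
  case False then show ?thesis by blast
qed

lemma Inv_nb: assumes "Inv E par c" shows "\<not> blocked 3 V E c"
proof (rule notblocked)
  fix v assume "c v = None" "3 \<le> deg E v"
  then obtain b where "\<forall>u\<in>nb E v. c u = None \<or> c u = Some b" using Inv_one[OF assms] by blast
  then show "\<exists>a1 a2. \<forall>u\<in>nb E v. c u = None \<or> c u = Some a1 \<or> c u = Some a2" by blast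
qed

lemma child_clean:
  assumes "Inv E par c" "c u = None" "3 \<le> deg E u" "par u = Some z" "c z = None"
  shows "\<forall>y\<in>nb E u. c y = None"
proof (rule ballI, rule ccontr)
  fix y assume y: "y \<in> nb E u" "c y \<noteq> None"
  show False
  proof (cases "par u = Some y")
    case True then show False using assms y by simp
  next
    case False
    then obtain p where "par u = Some p" "c p \<noteq> None" using InvD2[OF assms(1-3) y] by blast
    then show False using assms by simp
  qed
qed

lemma root_clean:
  assumes "Inv E par c" "c u = None" "3 \<le> deg E u" "par u = None"
  shows "\<forall>y\<in>nb E u. c y = None"
proof (rule ballI, rule ccontr)
  fix y assume y: "y \<in> nb E u" "c y \<noteq> None"
  have "par u \<noteq> Some y" using assms by simp
  then obtain p where "par u = Some p" using InvD2[OF assms(1-3) y] by blast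
  then show False using assms by simp
qed

lemma unc_dec: "v \<in> V \<Longrightarrow> c v = None \<Longrightarrow> unc V (c(v:=Some a)) < unc V c"
proof -
  assume v: "v \<in> V" "c v = None"
  have eq: "{x\<in>V. (c(v:=Some a)) x = None} = {x\<in>V. c x = None} - {v}" by auto
  have fin: "finite {x\<in>V. c x = None}" using finV by simp
  have vin: "v \<in> {x\<in>V. c x = None}" using v by simp
  have "card ({x\<in>V. c x = None} - {v}) < card {x\<in>V. c x = None}" by (rule card_Diff1_less[OF fin vin])
  then show ?thesis unfolding unc_def eq .
qed

lemma Inv_upd:
  assumes inv: "Inv E par c"
    and mono: "\<And>x. c x \<noteq> None \<Longrightarrow> c' x = c x"
    and new: "\<And>u z. u \<notin> X \<Longrightarrow> c' u = None \<Longrightarrow> 3 \<le> deg E u \<Longrightarrow> z \<in> nb E u \<Longrightarrow> c' z \<noteq> c z \<Longrightarrow> par u = Some z"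
    and ex: "\<And>u. u \<in> X \<Longrightarrow> InvAt E par c' u"
  shows "Inv E par c'"
  unfolding Inv_def
proof
  fix u
  show "InvAt E par c' u"
  proof (cases "u \<in> X")
    case True then show ?thesis using ex by blast
  next
    case uX: False
    show ?thesis unfolding InvAt_def
    proof (intro impI)
      assume cu: "c' u = None" and du: "3 \<le> deg E u"
      have cu0: "c u = None" using mono cu by fastforce
      show "(\<forall>y\<in>nb E u. \<forall>z\<in>nb E u. c' y \<noteq> None \<longrightarrow> c' z \<noteq> None \<longrightarrow> c' y = c' z) \<and>
        (\<forall>y\<in>nb E u. c' y \<noteq> None \<longrightarrow> par u \<noteq> Some y \<longrightarrow> (\<exists>p. par u = Some p \<and> c' p \<noteq> None))"
      proof (cases "\<exists>z\<in>nb E u. c' z \<noteq> c z")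
        case True
        then obtain z where z: "z \<in> nb E u" "c' z \<noteq> c z" by blast
        have pz: "par u = Some z" using new[OF uX cu du z] .
        have cz: "c z = None" using mono z(2) by blast
        have clean: "\<forall>y\<in>nb E u. c y = None" using child_clean[OF inv cu0 du pz cz] .
        have only: "\<And>y. y \<in> nb E u \<Longrightarrow> c' y \<noteq> None \<Longrightarrow> y = z"
        proof -
          fix y assume y: "y \<in> nb E u" "c' y \<noteq> None"
          then have "c' y \<noteq> c y" using clean by auto
          then have "par u = Some y" using new[OF uX cu du y(1)] by blast
          then show "y = z" using pz by simp
        qed
        show ?thesis
        proof (intro conjI ballI impI)
          fix y z' assume "y \<in> nb E u" "z' \<in> nb E u" "c' y \<noteq> None" "c' z' \<noteq> None"
          then have "y = z" "z' = z" using only by blast+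
          then show "c' y = c' z'" by simp
        next
          fix y assume "y \<in> nb E u" "c' y \<noteq> None" "par u \<noteq> Some y"
          then show "\<exists>p. par u = Some p \<and> c' p \<noteq> None" using only pz by blast
        qed
      next
        case False
        then have eq: "\<forall>z\<in>nb E u. c' z = c z" by blast
        have A: "\<forall>y\<in>nb E u. \<forall>z\<in>nb E u. c y \<noteq> None \<longrightarrow> c z \<noteq> None \<longrightarrow> c y = c z"
          using InvD1[OF inv cu0 du] by blast
        have B: "\<forall>y\<in>nb E u. c y \<noteq> None \<longrightarrow> par u \<noteq> Some y \<longrightarrow> (\<exists>p. par u = Some p \<and> c p \<noteq> None)"
          using InvD2[OF inv cu0 du] by blast
        show ?thesis
        proof (intro conjI ballI impI)
          fix y z' assume yz: "y \<in> nb E u" "z' \<in> nb E u" "c' y \<noteq> None" "c' z' \<noteq> None"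
          have e1: "c' y = c y" "c' z' = c z'" using eq yz by blast+
          have "c y = c z'" using A yz e1 by simp
          then show "c' y = c' z'" using e1 by simp
        next
          fix y assume y: "y \<in> nb E u" "c' y \<noteq> None" "par u \<noteq> Some y"
          have "c y \<noteq> None" using y eq by simp
          then obtain p where "par u = Some p" "c p \<noteq> None" using B y by blast
          moreover then have "c' p \<noteq> None" using mono[of p] by simp
          ultimately show "\<exists>p. par u = Some p \<and> c' p \<noteq> None" by blast
        qed
      qed
    qed
  qed
qed

lemma color_safe:
  assumes inv: "Inv E par c" and ct: "c t = None"
    and nog: "\<And>g. par t = Some g \<Longrightarrow> c g = None \<Longrightarrow> 3 \<le> deg E g \<Longrightarrow> False"
  shows "Inv E par (c(t:=Some a))"
proof (rule Inv_upd[OF inv, where X="{}"])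
  show "\<And>x. c x \<noteq> None \<Longrightarrow> (c(t := Some a)) x = c x" using ct by auto
next
  fix u z assume u: "(c(t := Some a)) u = None" "3 \<le> deg E u" "z \<in> nb E u" "(c(t := Some a)) z \<noteq> c z"
  then have zt: "z = t" by (metis fun_upd_other)
  have ut: "u \<noteq> t" using u by auto
  then have cu: "c u = None" using u by simp
  have "par z \<noteq> Some u" using nog[of u] zt cu u(2) by blast
  then show "par u = Some z" using u(3) adj_new by blast
qed auto

lemma alice_step:
  assumes inv: "Inv E par c"
    and IH: "\<And>c'. Inv E par c' \<Longrightarrow> unc V c' < unc V c \<Longrightarrow> win_bob 3 V E c'"
  shows "win_alice 3 V E c"
proof (cases "alice_done 3 V E c")
  case True then show ?thesis by (rule alice_fin[OF Inv_nb[OF inv]])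
next
  case False
  then obtain u where u: "u \<in> V" "c u = None" "3 \<le> deg E u" unfolding alice_done_def by auto
  obtain t where t: "t \<in> V" "c t = None" "3 \<le> deg E t"
    and nog: "\<And>g. par t = Some g \<Longrightarrow> c g = None \<Longrightarrow> 3 \<le> deg E g \<Longrightarrow> False"
  proof (cases "\<exists>g. par u = Some g \<and> c g = None \<and> 3 \<le> deg E g")
    case True
    then obtain g where g: "par u = Some g" "c g = None" "3 \<le> deg E g" by blast
    have pg: "par g = None" using A2[OF g(1) u(3) g(3)] .
    have gV: "g \<in> V" using par_V[OF g(1)] .
    show ?thesis by (rule that[of g]) (use g gV pg in auto)
  next
    case False then show ?thesis using that u by blast
  qed
  obtain b where b: "\<forall>y\<in>nb E t. c y = None \<or> c y = Some b" using Inv_one[OF inv t(2,3)] by blast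
  obtain a where a: "legal 3 E c t a" using exists_legal[of E t c b b] b by blast
  have inv2: "Inv E par (c(t:=Some a))" using color_safe[OF inv t(2)] nog by blast
  have "win_bob 3 V E (c(t:=Some a))" using IH[OF inv2 unc_dec[where c=c and v=t and a=a, OF t(1,2)]] .
  then show ?thesis using alice_move[OF Inv_nb[OF inv] t(1) t(2) t(3) a] by simp
qed

lemma bob_resp:
  assumes inv: "Inv E par c" and w: "w \<in> V" "c w = None" "legal 3 E c w a0"
    and IH: "\<And>c'. Inv E par c' \<Longrightarrow> unc V c' < unc V c \<Longrightarrow> win_bob 3 V E c'"
  shows "win_alice 3 V E (c(w:=Some a0))"
proof -
  define c1 where "c1 = c(w:=Some a0)"
  have a0: "a0 < 3" using w(3) by (simp add: legal_def)
  have unc1: "unc V c1 < unc V c" unfolding c1_def by (rule unc_dec[where c=c and v=w, OF w(1,2)])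
  have mono1: "\<And>x. c x \<noteq> None \<Longrightarrow> c1 x = c x" using w(2) by (auto simp: c1_def)
  have nb1: "\<not> blocked 3 V E c1"
  proof (rule notblocked)
    fix v assume v: "c1 v = None" "3 \<le> deg E v"
    then have vw: "v \<noteq> w" and cv: "c v = None" by (auto simp: c1_def split: if_splits)
    obtain b where b: "\<forall>y\<in>nb E v. c y = None \<or> c y = Some b" using Inv_one[OF inv cv v(2)] by blast
    have "\<forall>y\<in>nb E v. c1 y = None \<or> c1 y = Some b \<or> c1 y = Some a0"
      using b by (auto simp: c1_def)
    then show "\<exists>a1 a2. \<forall>u\<in>nb E v. c1 u = None \<or> c1 u = Some a1 \<or> c1 u = Some a2" by blast
  qed
  have "win_alice 3 V E c1"
  proof (cases "\<exists>p. par w = Some p \<and> c1 p = None \<and> 3 \<le> deg E p")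
    case True
    then obtain p where p: "par w = Some p" "c1 p = None" "3 \<le> deg E p" by blast
    have pw: "p \<noteq> w" using p(2) by (auto simp: c1_def)
    have cp: "c p = None" using p(2) pw by (simp add: c1_def)
    have pV: "p \<in> V" using par_V[OF p(1)] .
    show ?thesis
    proof (cases "\<exists>g. par p = Some g \<and> c1 g = None \<and> 3 \<le> deg E g")
      case True
      then obtain g where g: "par p = Some g" "c1 g = None" "3 \<le> deg E g" by blast
      have pg: "par g = None" using A2[OF g(1) p(3) g(3)] .
      have gV: "g \<in> V" using par_V[OF g(1)] .
      have gw: "g \<noteq> w" using g(2) by (auto simp: c1_def)
      have cg: "c g = None" using g(2) gw by (simp add: c1_def)
      have gp: "g \<noteq> p" using par_ne[OF g(1)] by simp
      have clean_g: "\<forall>y\<in>nb E g. c y = None" using root_clean[OF inv cg g(3) pg] .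
      have wng: "w \<notin> nb E g"
      proof
        assume "w \<in> nb E g"
        then have "par g = Some w \<or> par w = Some g" using A1 by blast
        then show False using pg p(1) gp by simp
      qed
      have lg: "legal 3 E c1 g a0" unfolding legal_nb
        using a0 clean_g wng by (auto simp: c1_def)
      define c2 where "c2 = c1(g:=Some a0)"
      have unc2: "unc V c2 < unc V c" unfolding c2_def using unc_dec[where c=c1 and v=g and a=a0, OF gV g(2)] unc1 by simp
      have clean_p: "\<forall>y\<in>nb E p. c y = None" using child_clean[OF inv cp p(3) g(1) cg] .
      have inv2: "Inv E par c2"
      proof (rule Inv_upd[OF inv, where X="{p}"])
        show "\<And>x. c x \<noteq> None \<Longrightarrow> c2 x = c x" using w(2) cg by (auto simp: c2_def c1_def)
      next
        fix u z assume u: "u \<notin> {p}" "c2 u = None" "3 \<le> deg E u" "z \<in> nb E u" "c2 z \<noteq> c z"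
        have zz: "z = w \<or> z = g" using u(5) by (auto simp: c2_def c1_def split: if_splits)
        have uw: "u \<noteq> w" "u \<noteq> g" using u(2) by (auto simp: c2_def c1_def split: if_splits)
        show "par u = Some z"
        proof (rule adj_new[OF u(4)])
          show "par z \<noteq> Some u" using zz p(1) pg u(1) by auto
        qed
      next
        fix u assume "u \<in> {p}"
        then have up: "u = p" by simp
        have c2p: "c2 p = None" using cp pw gp by (simp add: c2_def c1_def)
        have only: "c2 y = Some a0" if "y \<in> nb E p" "c2 y \<noteq> None" for y
        proof -
          have "c y = None" using clean_p that(1) by blast
          then show ?thesis using that(2) by (cases "y = g"; cases "y = w") (auto simp: c2_def c1_def)
        qed
        show "InvAt E par c2 u" unfolding InvAt_def up
        proof (intro impI conjI ballI)
          fix y z assume "y \<in> nb E p" "z \<in> nb E p" "c2 y \<noteq> None" "c2 z \<noteq> None"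
          then show "c2 y = c2 z" using only by metis
        next
          fix y assume "y \<in> nb E p" "c2 y \<noteq> None" "par p \<noteq> Some y"
          show "\<exists>q. par p = Some q \<and> c2 q \<noteq> None" using g(1) by (auto simp: c2_def)
        qed
      qed
      have "win_bob 3 V E c2" using IH[OF inv2 unc2] .
      then show ?thesis using alice_move[OF nb1 gV g(2) g(3) lg] by (simp add: c2_def c1_def)
    next
      case False
      obtain b where b: "\<forall>y\<in>nb E p. c y = None \<or> c y = Some b" using Inv_one[OF inv cp p(3)] by blast
      have "\<forall>y\<in>nb E p. c1 y = None \<or> c1 y = Some b \<or> c1 y = Some a0"
        using b by (auto simp: c1_def)
      then obtain a where lp: "legal 3 E c1 p a" using exists_legal[of E p c1 b a0] by blast
      define c2 where "c2 = c1(p:=Some a)"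
      have unc2: "unc V c2 < unc V c" unfolding c2_def using unc_dec[where c=c1 and v=p and a=a, OF pV p(2)] unc1 by simp
      have inv2: "Inv E par c2"
      proof (rule Inv_upd[OF inv, where X="{}"])
        show "\<And>x. c x \<noteq> None \<Longrightarrow> c2 x = c x" using w(2) cp by (auto simp: c2_def c1_def)
      next
        fix u z assume u: "u \<notin> {}" "c2 u = None" "3 \<le> deg E u" "z \<in> nb E u" "c2 z \<noteq> c z"
        have zz: "z = w \<or> z = p" using u(5) by (auto simp: c2_def c1_def split: if_splits)
        have up: "u \<noteq> p" and c1u: "c1 u = None" using u(2) by (auto simp: c2_def split: if_splits)
        show "par u = Some z"
        proof (rule adj_new[OF u(4)])
          show "par z \<noteq> Some u" using zz p(1) up False c1u u(3) by auto
        qed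
      qed auto
      have "win_bob 3 V E c2" using IH[OF inv2 unc2] .
      then show ?thesis using alice_move[OF nb1 pV p(2) p(3) lp] by (simp add: c2_def c1_def)
    qed
  next
    case False
    have inv1: "Inv E par c1"
    proof (rule Inv_upd[OF inv, where X="{}"])
      show "\<And>x. c x \<noteq> None \<Longrightarrow> c1 x = c x" by (rule mono1)
    next
      fix u z assume u: "u \<notin> {}" "c1 u = None" "3 \<le> deg E u" "z \<in> nb E u" "c1 z \<noteq> c z"
      have zz: "z = w" using u(5) by (auto simp: c1_def split: if_splits)
      show "par u = Some z"
      proof (rule adj_new[OF u(4)])
        show "par z \<noteq> Some u" using zz False u(2,3) by auto
      qed
    qed auto
    show ?thesis
    proof (rule alice_step[OF inv1])
      fix c' assume "Inv E par c'" "unc V c' < unc V c1"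
      then show "win_bob 3 V E c'" using IH unc1 by simp
    qed
  qed
  then show ?thesis by (simp add: c1_def)
qed

theorem main: "Inv E par c \<Longrightarrow> win_bob 3 V E c"
proof (induction "unc V c" arbitrary: c rule: less_induct)
  case less
  have IH: "\<And>c'. Inv E par c' \<Longrightarrow> unc V c' < unc V c \<Longrightarrow> win_bob 3 V E c'"
    using less by blast
  show ?case
  proof (cases "alice_done 3 V E c")
    case True then show ?thesis by (rule bob_done[OF Inv_nb[OF less.prems]])
  next
    case False
    show ?thesis
    proof (rule bob_move[OF Inv_nb[OF less.prems]])
      show "win_alice 3 V E c" by (rule alice_step[OF less.prems IH])
    next
      show "\<forall>v\<in>V. \<forall>a. c v = None \<and> legal 3 E c v a \<longrightarrow> win_alice 3 V E (c(v \<mapsto> a))"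
        using bob_resp[OF less.prems _ _ _ IH] by blast
    qed
  qed
qed

end



definition acyc :: "'v set set \<Rightarrow> bool" where
  "acyc D \<longleftrightarrow> \<not>(\<exists>xs. 3 \<le> length xs \<and> distinct xs \<and> (\<forall>i<length xs. {xs!i, xs!((i+1) mod length xs)} \<in> D))"

lemma acyc_mono: "acyc D \<Longrightarrow> D' \<subseteq> D \<Longrightarrow> acyc D'"
  unfolding acyc_def by blast

definition ispath :: "'v set set \<Rightarrow> 'v list \<Rightarrow> bool" where
  "ispath D xs \<longleftrightarrow> distinct xs \<and> 2 \<le> length xs \<and> (\<forall>i. Suc i < length xs \<longrightarrow> {xs!i, xs!Suc i} \<in> D)"

lemma path_verts: assumes "ispath D xs" shows "set xs \<subseteq> \<Union>D"
proof
  fix v assume "v \<in> set xs"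
  then obtain i where i: "i < length xs" "xs!i = v" by (auto simp: in_set_conv_nth)
  have L: "2 \<le> length xs" using assms by (simp add: ispath_def)
  show "v \<in> \<Union>D"
  proof (cases "Suc i < length xs")
    case True
    then have "{xs!i, xs!Suc i} \<in> D" using assms by (simp add: ispath_def)
    then show ?thesis using i by blast
  next
    case False
    then have "i = Suc (i - 1)" "Suc (i-1) < length xs" using i L by auto
    then have "{xs!(i-1), xs!i} \<in> D" using assms unfolding ispath_def by metis
    then show ?thesis using i by blast
  qed
qed

lemma path_len: assumes "finite (\<Union>D)" "ispath D xs" shows "length xs < Suc (card (\<Union>D))"
proof -
  have "length xs = card (set xs)" using assms(2) by (simp add: ispath_def distinct_card)
  also have "\<dots> \<le> card (\<Union>D)" using card_mono[OF assms(1) path_verts[OF assms(2)]] .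
  finally show ?thesis by simp
qed

lemma head_leaf:
  assumes ac: "acyc D" and p: "ispath D xs" and mx: "\<And>ys. ispath D ys \<Longrightarrow> length ys \<le> length xs"
  shows "nb D (xs!0) = {xs!1}"
proof -
  have d: "distinct xs" and L: "2 \<le> length xs" and ed: "\<And>i. Suc i < length xs \<Longrightarrow> {xs!i, xs!Suc i} \<in> D"
    using p by (auto simp: ispath_def)
  have e01: "{xs!0, xs!1} \<in> D" using ed[of 0] L by simp
  have i1: "1 < length xs" and i0: "0 < length xs" using L by auto
  have n01: "xs!1 \<noteq> xs!0" using nth_eq_iff_index_eq[OF d i1 i0] by simp
  have "xs!1 \<in> nb D (xs!0)" using e01 n01 by (simp add: nb_def)
  moreover have "z = xs!1" if z: "z \<in> nb D (xs!0)" for z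
  proof (rule ccontr)
    assume zn: "z \<noteq> xs!1"
    have ez: "{xs!0, z} \<in> D" and z0: "z \<noteq> xs!0" using z by (auto simp: nb_def)
    show False
    proof (cases "z \<in> set xs")
      case False
      have "ispath D (z # xs)" unfolding ispath_def
      proof (intro conjI allI impI)
        show "distinct (z # xs)" using d False by simp
        show "2 \<le> length (z # xs)" using L by simp
      next
        fix i assume i: "Suc i < length (z # xs)"
        show "{(z # xs) ! i, (z # xs) ! Suc i} \<in> D"
        proof (cases i)
          case 0 then show ?thesis using ez by (simp add: insert_commute)
        next
          case (Suc j) then show ?thesis using ed[of j] i by simp
        qed
      qed
      then show False using mx[of "z # xs"] by simp
    next
      case True
      then obtain j where j: "j < length xs" "xs!j = z" by (auto simp: in_set_conv_nth)
      have j2: "2 \<le> j" using j z0 zn by (cases j; cases "j - 1"; auto)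
      define ys where "ys = take (Suc j) xs"
      have ly: "length ys = Suc j" using j by (simp add: ys_def)
      have "\<exists>xs. 3 \<le> length xs \<and> distinct xs \<and> (\<forall>i<length xs. {xs!i, xs!((i+1) mod length xs)} \<in> D)"
      proof (intro exI conjI allI impI)
        show "3 \<le> length ys" using ly j2 by simp
        show "distinct ys" using d by (simp add: ys_def)
      next
        fix i assume i: "i < length ys"
        show "{ys!i, ys!((i+1) mod length ys)} \<in> D"
        proof (cases "i < j")
          case True
          then have "(i+1) mod length ys = Suc i" using ly by simp
          then show ?thesis using ed[of i] True j by (simp add: ys_def)
        next
          case False
          then have "i = j" using i ly by simp
          then have "(i+1) mod length ys = 0" using ly by simp
          then show ?thesis using ez j \<open>i = j\<close> by (simp add: ys_def insert_commute)
        qed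
      qed
      then show False using ac by (simp add: acyc_def)
    qed
  qed
  ultimately show ?thesis by blast
qed

lemma rev_path: assumes "ispath D xs" shows "ispath D (rev xs)"
proof -
  have d: "distinct xs" and L: "2 \<le> length xs" and ed: "\<And>i. Suc i < length xs \<Longrightarrow> {xs!i, xs!Suc i} \<in> D"
    using assms by (auto simp: ispath_def)
  show ?thesis unfolding ispath_def
  proof (intro conjI allI impI)
    show "distinct (rev xs)" using d by simp
    show "2 \<le> length (rev xs)" using L by simp
  next
    fix i assume i: "Suc i < length (rev xs)"
    define n where "n = length xs"
    have a: "rev xs ! i = xs ! (n - Suc i)" using i by (simp add: rev_nth n_def)
    have b: "rev xs ! Suc i = xs ! (n - Suc (Suc i))" using i by (simp add: rev_nth n_def)
    have c: "Suc (n - Suc (Suc i)) = n - Suc i" "Suc (n - Suc (Suc i)) < length xs" using i by (auto simp: n_def)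
    have "{xs ! (n - Suc (Suc i)), xs ! Suc (n - Suc (Suc i))} \<in> D" using ed c(2) by blast
    then show "{rev xs ! i, rev xs ! Suc i} \<in> D" using a b c(1) by (simp add: insert_commute)
  qed
qed

lemma exists_leaf:
  assumes fin: "finite D" and two: "\<forall>e\<in>D. \<exists>a b. e = {a,b} \<and> a \<noteq> b" and ac: "acyc D" and ne: "D \<noteq> {}"
  shows "\<exists>l m. l \<noteq> r \<and> nb D l = {m}"
proof -
  obtain e where e: "e \<in> D" using ne by blast
  then obtain a b where ab: "e = {a,b}" "a \<noteq> b" using two by blast
  have fU: "finite (\<Union>D)" using fin two by auto
  have p0: "ispath D [a,b]" using ab e by (simp add: ispath_def)
  obtain xs where p: "ispath D xs" and mx: "\<And>ys. ispath D ys \<Longrightarrow> length ys \<le> length xs"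
    using Lattices_Big.ex_has_greatest_nat[of "ispath D" "[a,b]" length "Suc (card (\<Union>D))"] p0 path_len[OF fU]
    by blast
  have d: "distinct xs" and L: "2 \<le> length xs" using p by (auto simp: ispath_def)
  have l1: "nb D (xs!0) = {xs!1}" by (rule head_leaf[OF ac p mx])
  have pr: "ispath D (rev xs)" by (rule rev_path[OF p])
  have l2: "nb D (rev xs!0) = {rev xs!1}" by (rule head_leaf[OF ac pr]) (use mx in simp)
  have "rev xs ! 0 = xs ! (length xs - 1)" using rev_nth[of 0 xs] L by (cases xs) auto
  moreover have "xs ! (length xs - 1) \<noteq> xs ! 0"
  proof -
    have i1: "length xs - 1 < length xs" and i0: "0 < length xs" using L by auto
    show ?thesis using nth_eq_iff_index_eq[OF d i1 i0] L by simp
  qed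
  ultimately have "rev xs ! 0 \<noteq> xs ! 0" by simp
  then show ?thesis using l1 l2 by metis
qed

lemma orient:
  assumes "finite D" "\<forall>e\<in>D. \<exists>a b. e = {a,b} \<and> a \<noteq> b" "acyc D"
  shows "\<exists>par. (\<forall>x y. y\<in>nb D x \<longrightarrow> par x = Some y \<or> par y = Some x) \<and>
      (\<forall>x y. par x = Some y \<longrightarrow> y \<in> nb D x) \<and> par r = None"
  using assms
proof (induction "card D" arbitrary: D rule: less_induct)
  case less
  show ?case
  proof (cases "D = {}")
    case True
    show ?thesis by (rule exI[of _ "\<lambda>_. None"]) (simp add: True nb_def)
  next
    case False
    obtain l m where lm: "l \<noteq> r" "nb D l = {m}" using exists_leaf[OF less.prems False] by blast
    have elm: "{l,m} \<in> D" and ml: "m \<noteq> l" using lm(2) unfolding nb_def by blast+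
    define D' where "D' = D - {{l,m}}"
    have cD': "card D' < card D" unfolding D'_def using less.prems(1) elm by (rule card_Diff1_less)
    have "\<exists>par. (\<forall>x y. y\<in>nb D' x \<longrightarrow> par x = Some y \<or> par y = Some x) \<and>
      (\<forall>x y. par x = Some y \<longrightarrow> y \<in> nb D' x) \<and> par r = None"
      using less.hyps[OF cD'] less.prems acyc_mono[OF less.prems(3), of D'] by (simp add: D'_def)
    then obtain par' where P1: "\<And>x y. y\<in>nb D' x \<Longrightarrow> par' x = Some y \<or> par' y = Some x"
      and P2: "\<And>x y. par' x = Some y \<Longrightarrow> y \<in> nb D' x" and P3: "par' r = None" by blast
    have nbsub: "nb D' x \<subseteq> nb D x" for x by (auto simp: nb_def D'_def)
    have notl: "x \<noteq> l" "y \<noteq> l" if "y \<in> nb D' x" for x y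
    proof -
      have xy: "{x,y} \<in> D" "{x,y} \<noteq> {l,m}" "y \<noteq> x" using that by (auto simp: nb_def D'_def)
      show "x \<noteq> l"
      proof
        assume "x = l"
        then have "y \<in> nb D l" using xy by (simp add: nb_def)
        then have "y = m" using lm by simp
        then show False using xy \<open>x = l\<close> by simp
      qed
      show "y \<noteq> l"
      proof
        assume "y = l"
        then have "x \<in> nb D l" using xy by (auto simp: nb_def insert_commute)
        then have "x = m" using lm by simp
        then show False using xy \<open>y = l\<close> by (simp add: insert_commute)
      qed
    qed
    define par where "par = par'(l := Some m)"
    show ?thesis
    proof (rule exI[of _ par], intro conjI allI impI)
      fix x y assume y: "y \<in> nb D x"
      show "par x = Some y \<or> par y = Some x"
      proof (cases "{x,y} = {l,m}")
        case True
        then have "(x = l \<and> y = m) \<or> (x = m \<and> y = l)" by (simp add: doubleton_eq_iff)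
        then show ?thesis by (auto simp: par_def)
      next
        case False
        then have "y \<in> nb D' x" using y by (auto simp: nb_def D'_def)
        then show ?thesis using P1 notl by (simp add: par_def)
      qed
    next
      fix x y assume xy: "par x = Some y"
      show "y \<in> nb D x"
      proof (cases "x = l")
        case True
        then have "y = m" using xy by (simp add: par_def)
        then show ?thesis using True lm by simp
      next
        case False
        then have "par' x = Some y" using xy by (simp add: par_def)
        then show ?thesis using P2 nbsub by blast
      qed
    next
      show "par r = None" using P3 lm(1) by (simp add: par_def)
    qed
  qed
qed



definition rel :: "'v set set \<Rightarrow> ('v \<times> 'v) set" where
  "rel D = {(u, v). {u, v} \<in> D}"

lemma rel_mono: "D \<subseteq> D' \<Longrightarrow> (rel D)\<^sup>* \<subseteq> (rel D')\<^sup>*"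
  unfolding rel_def by (rule rtrancl_mono) auto

lemma rel_sym: "(a,b) \<in> rel D \<longleftrightarrow> (b,a) \<in> rel D"
  unfolding rel_def by (auto simp: insert_commute)

lemma cand_iff: "trunk_candidate V E c W D \<longleftrightarrow> W \<subseteq> V \<and> D \<subseteq> E \<and> (\<forall>e\<in>D. e \<subseteq> W) \<and> W \<noteq> {} \<and>
   (\<forall>a\<in>W. \<forall>b\<in>W. (a,b) \<in> (rel D)\<^sup>*) \<and> (\<forall>z\<in>W. c z \<noteq> None \<longrightarrow> deg D z = 1)"
  unfolding trunk_candidate_def is_subgraph_def connected_graph_def rel_def by blast

lemma trunk_iff: "(W,D) \<in> trunks V E c \<longleftrightarrow> trunk_candidate V E c W D \<and>
     (\<forall>W' D'. trunk_candidate V E c W' D' \<and> W \<subseteq> W' \<and> D \<subseteq> D' \<longrightarrow> W' = W \<and> D' = D)"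
  unfolding trunks_def is_trunk_def by simp

lemma deg_one_ne: "deg D z = 1 \<Longrightarrow> nb D z \<noteq> {}"
  by (auto simp: deg_nb)

context
  fixes V :: "'a set" and E :: "'a set set" and c :: "'a \<Rightarrow> nat option"
  assumes pcf: "pc_forest V E c"
begin

lemma finV0: "finite V" using pcf by (simp add: pc_forest_def forest_def simple_graph_def)

lemma edgeE: "e \<in> E \<Longrightarrow> \<exists>a b. e = {a,b} \<and> a \<noteq> b \<and> a \<in> V \<and> b \<in> V"
  using pcf by (simp add: pc_forest_def forest_def simple_graph_def)

lemma nocyc: "\<not> has_cycle V E"
  using pcf by (simp add: pc_forest_def forest_def)

lemma E_sub: "E \<subseteq> Pow V" using edgeE by blast

lemma finE0: "finite E" using E_sub finV0 finite_subset by blast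

lemma tF: assumes "T \<in> trunks V E c"
  shows "fst T \<subseteq> V" "snd T \<subseteq> E" "\<And>e. e \<in> snd T \<Longrightarrow> e \<subseteq> fst T"
    "\<And>x. x \<in> fst T \<Longrightarrow> c x \<noteq> None \<Longrightarrow> deg (snd T) x = 1"
proof -
  obtain W D where T: "T = (W,D)" by (cases T)
  have "trunk_candidate V E c W D" using assms T trunk_iff by blast
  then have "W \<subseteq> V" "D \<subseteq> E" "\<forall>e\<in>D. e \<subseteq> W" "\<forall>z\<in>W. c z \<noteq> None \<longrightarrow> deg D z = 1"
    unfolding cand_iff by blast+
  then show "fst T \<subseteq> V" "snd T \<subseteq> E" "\<And>e. e \<in> snd T \<Longrightarrow> e \<subseteq> fst T"
    "\<And>x. x \<in> fst T \<Longrightarrow> c x \<noteq> None \<Longrightarrow> deg (snd T) x = 1" using T by auto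
qed

lemma pair_RE:
  assumes "{p,q} \<in> R_E V E c" "p \<noteq> q"
  shows "fst q = fst p \<and> fst p \<in> trunks V E c \<and> {snd p, snd q} \<in> snd (fst p)"
proof -
  obtain T x y where e: "{p,q} = {(T,x),(T,y)}" "T \<in> trunks V E c" "{x,y} \<in> snd T"
    using assms(1) unfolding R_E_def by blast
  then have "(p = (T,x) \<and> q = (T,y)) \<or> (p = (T,y) \<and> q = (T,x))" by (simp add: doubleton_eq_iff)
  then show ?thesis using e by (auto simp: insert_commute)
qed

lemma RE_sub: "R'_E V E c \<subseteq> R_E V E c"
  unfolding R'_E_def E_gt2_def by blast

lemma trunksF_fin: "finite (trunks V E c)"
proof -
  have "trunks V E c \<subseteq> Pow V \<times> Pow E"
  proof
    fix T assume "T \<in> trunks V E c"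
    then show "T \<in> Pow V \<times> Pow E" using tF(1,2)[of T] by (simp add: mem_Times_iff)
  qed
  then show ?thesis using finV0 finE0 finite_subset by blast
qed

lemma finRV: "finite (R_V V E c)"
proof -
  have "R_V V E c \<subseteq> trunks V E c \<times> V"
  proof
    fix p assume "p \<in> R_V V E c"
    then obtain T x where p: "p = (T,x)" "T \<in> trunks V E c" "x \<in> fst T" unfolding R_V_def by blast
    then have "x \<in> V" using tF(1)[of T] by blast
    then show "p \<in> trunks V E c \<times> V" using p by simp
  qed
  then show ?thesis using trunksF_fin finV0 finite_subset by blast
qed

lemma RE_edges: "\<forall>e\<in>R'_E V E c. \<exists>x y. e = {x,y} \<and> x\<noteq>y \<and> x\<in>R_V V E c \<and> y\<in>R_V V E c"
proof
  fix e assume "e \<in> R'_E V E c"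
  then have "e \<in> R_E V E c" using RE_sub by blast
  then obtain T x y where e: "e = {(T,x),(T,y)}" "T \<in> trunks V E c" "{x,y} \<in> snd T"
    unfolding R_E_def by blast
  have "{x,y} \<in> E" using tF(2)[OF e(2)] e(3) by blast
  then obtain a b where ab: "{x,y} = {a,b}" "a \<noteq> b" using edgeE by blast
  have xy: "x \<noteq> y" using ab by (auto simp: doubleton_eq_iff)
  have "x \<in> fst T" "y \<in> fst T" using tF(3)[OF e(2) e(3)] by auto
  then have "(T,x) \<in> R_V V E c" "(T,y) \<in> R_V V E c" using e(2) unfolding R_V_def by blast+
  then show "\<exists>x y. e = {x,y} \<and> x\<noteq>y \<and> x\<in>R_V V E c \<and> y\<in>R_V V E c" using e(1) xy by blast
qed

lemma RE_sub_Pow: "R'_E V E c \<subseteq> Pow (R_V V E c)"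
proof
  fix e assume "e \<in> R'_E V E c"
  then obtain x y where "e = {x,y}" "x\<in>R_V V E c" "y\<in>R_V V E c" using RE_edges by meson
  then show "e \<in> Pow (R_V V E c)" by simp
qed

lemma finRE: "finite (R'_E V E c)" by (rule finite_subset[OF RE_sub_Pow]) (simp add: finRV)

lemma nbRE_sub: "nb (R'_E V E c) x \<subseteq> R_V V E c"
proof
  fix y assume "y \<in> nb (R'_E V E c) x"
  then have "{x,y} \<in> R'_E V E c" by (simp add: nb_def)
  then have "{x,y} \<subseteq> R_V V E c" using RE_sub_Pow by blast
  then show "y \<in> R_V V E c" by simp
qed

lemma nbRE_fin: "finite (nb (R'_E V E c) x)" by (rule finite_subset[OF nbRE_sub finRV])

lemma col_deg:
  assumes "R_col c p \<noteq> None"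
  shows "card (nb (R'_E V E c) p) \<le> 1"
proof (cases "nb (R'_E V E c) p = {}")
  case True then show ?thesis by simp
next
  case False
  obtain T x where p: "p = (T,x)" by (cases p)
  have sub: "nb (R'_E V E c) p \<subseteq> (\<lambda>y. (T,y)) ` nb (snd T) x"
  proof
    fix q assume "q \<in> nb (R'_E V E c) p"
    then have q: "{p,q} \<in> R_E V E c" "q \<noteq> p" using RE_sub by (auto simp: nb_def)
    then have h: "fst q = T" "{x, snd q} \<in> snd T" using pair_RE[OF q(1)] p by auto
    then have "q = (T, snd q)" by (metis prod.collapse)
    moreover then have "snd q \<noteq> x" using q(2) p by auto
    ultimately show "q \<in> (\<lambda>y. (T,y)) ` nb (snd T) x" using h by (auto simp: nb_def)
  qed
  obtain q where "q \<in> nb (R'_E V E c) p" using False by blast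
  then have q: "{p,q} \<in> R_E V E c" "q \<noteq> p" using RE_sub by (auto simp: nb_def)
  then have h: "T \<in> trunks V E c" "{x, snd q} \<in> snd T" using pair_RE[OF q(1)] p by auto
  have "x \<in> fst T" using tF(3)[OF h(1) h(2)] by auto
  moreover have "c x \<noteq> None" using assms p by (simp add: R_col_def)
  ultimately have "deg (snd T) x = 1" using tF(4)[OF h(1)] by blast
  then have c1: "card (nb (snd T) x) = 1" by (simp add: deg_nb)
  then have fn: "finite (nb (snd T) x)" using card.infinite by fastforce
  have "card (nb (R'_E V E c) p) \<le> card ((\<lambda>y. (T,y)) ` nb (snd T) x)"
    by (rule card_mono[OF finite_imageI[OF fn] sub])
  also have "\<dots> \<le> card (nb (snd T) x)" by (rule card_image_le[OF fn])
  finally show ?thesis using c1 by simp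
qed

lemma col_deg_one:
  assumes "D \<subseteq> R'_E V E c" "R_col c z \<noteq> None" "nb D z \<noteq> {}"
  shows "deg D z = 1"
proof -
  have s: "nb D z \<subseteq> nb (R'_E V E c) z" using assms(1) by (auto simp: nb_def)
  have f: "finite (nb D z)" by (rule finite_subset[OF s nbRE_fin])
  have "card (nb D z) \<le> card (nb (R'_E V E c) z)" by (rule card_mono[OF nbRE_fin s])
  also have "\<dots> \<le> 1" by (rule col_deg[OF assms(2)])
  finally have "card (nb D z) \<le> 1" .
  moreover have "card (nb D z) \<noteq> 0" using f assms(3) by simp
  ultimately show ?thesis by (simp add: deg_nb)
qed

lemma tk_ext:
  assumes T: "(W,D) \<in> trunks (R_V V E c) (R'_E V E c) (R_col c)" and x: "x \<in> W"
    and y: "y \<in> nb (R'_E V E c) x"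
  shows "y \<in> W \<and> {x,y} \<in> D"
proof -
  have cand: "trunk_candidate (R_V V E c) (R'_E V E c) (R_col c) W D"
    and mx: "\<And>W' D'. trunk_candidate (R_V V E c) (R'_E V E c) (R_col c) W' D' \<Longrightarrow> W \<subseteq> W' \<Longrightarrow> D \<subseteq> D' \<Longrightarrow> W' = W \<and> D' = D"
    using T unfolding trunk_iff by blast+
  have W: "W \<subseteq> R_V V E c" "D \<subseteq> R'_E V E c" "\<forall>e\<in>D. e \<subseteq> W" "\<forall>a\<in>W. \<forall>b\<in>W. (a,b) \<in> (rel D)\<^sup>*"
    "\<forall>z\<in>W. R_col c z \<noteq> None \<longrightarrow> deg D z = 1"
    using cand unfolding cand_iff by blast+
  have exy: "{x,y} \<in> R'_E V E c" and yx: "y \<noteq> x" using y by (auto simp: nb_def)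
  have yV: "y \<in> R_V V E c" using y nbRE_sub by blast
  define W' where "W' = insert y W"
  define D' where "D' = insert {x,y} D"
  have DD': "D \<subseteq> D'" by (auto simp: D'_def)
  have r1: "(x,y) \<in> rel D'" "(y,x) \<in> rel D'" by (auto simp: rel_def D'_def insert_commute)
  have rm: "(rel D)\<^sup>* \<subseteq> (rel D')\<^sup>*" by (rule rel_mono[OF DD'])
  have cand': "trunk_candidate (R_V V E c) (R'_E V E c) (R_col c) W' D'"
    unfolding cand_iff
  proof (intro conjI ballI impI)
    show "W' \<subseteq> R_V V E c" using W(1) yV by (simp add: W'_def)
    show "D' \<subseteq> R'_E V E c" using W(2) exy by (simp add: D'_def)
    show "W' \<noteq> {}" by (simp add: W'_def)
  next
    fix e assume "e \<in> D'" then show "e \<subseteq> W'" using W(3) x by (auto simp: D'_def W'_def)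
  next
    fix a b assume a: "a \<in> W'" and b: "b \<in> W'"
    have toX: "(a, x) \<in> (rel D')\<^sup>*" if "a \<in> W'" for a
    proof (cases "a = y")
      case True then show ?thesis using r1 by blast
    next
      case False then have "a \<in> W" using that by (simp add: W'_def)
      then have "(a, x) \<in> (rel D)\<^sup>*" using W(4) x by blast
      then show ?thesis using rm by blast
    qed
    have fromX: "(x, b) \<in> (rel D')\<^sup>*" if "b \<in> W'" for b
    proof (cases "b = y")
      case True then show ?thesis using r1 by blast
    next
      case False then have "b \<in> W" using that by (simp add: W'_def)
      then have "(x, b) \<in> (rel D)\<^sup>*" using W(4) x by blast
      then show ?thesis using rm by blast
    qed
    show "(a, b) \<in> (rel D')\<^sup>*" using toX[OF a] fromX[OF b] by (rule rtrancl_trans)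
  next
    fix z assume z: "z \<in> W'" "R_col c z \<noteq> None"
    have ne: "nb D' z \<noteq> {}"
    proof (cases "z \<in> W")
      case True
      then have "deg D z = 1" using W(5) z(2) by blast
      then have "nb D z \<noteq> {}" by (rule deg_one_ne)
      then obtain q where "q \<in> nb D z" by blast
      then have "q \<in> nb D' z" using DD' unfolding nb_def by blast
      then show ?thesis by blast
    next
      case False
      then have zy: "z = y" using z(1) by (simp add: W'_def)
      have "{y,x} = {x,y}" by (rule insert_commute)
      then have "{y,x} \<in> D'" by (simp add: D'_def)
      then have "x \<in> nb D' z" using yx zy unfolding nb_def by blast
      then show ?thesis by blast
    qed
    have "D' \<subseteq> R'_E V E c" using W(2) exy by (simp add: D'_def)
    then show "deg D' z = 1" by (rule col_deg_one[OF _ z(2) ne])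
  qed
  have eqs: "W' = W \<and> D' = D" by (rule mx[OF cand']) (auto simp: W'_def D'_def)
  have "y \<in> W'" "{x,y} \<in> D'" by (simp_all add: W'_def D'_def)
  with eqs show ?thesis by simp
qed

lemma tk_uniq:
  assumes T1: "(W1,D1) \<in> trunks (R_V V E c) (R'_E V E c) (R_col c)"
    and T2: "(W2,D2) \<in> trunks (R_V V E c) (R'_E V E c) (R_col c)"
    and z: "z \<in> W1" "z \<in> W2"
  shows "W1 = W2 \<and> D1 = D2"
proof -
  have c1: "trunk_candidate (R_V V E c) (R'_E V E c) (R_col c) W1 D1"
    and mx1: "\<And>W' D'. trunk_candidate (R_V V E c) (R'_E V E c) (R_col c) W' D' \<Longrightarrow> W1 \<subseteq> W' \<Longrightarrow> D1 \<subseteq> D' \<Longrightarrow> W' = W1 \<and> D' = D1"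
    using T1 unfolding trunk_iff by blast+
  have c2: "trunk_candidate (R_V V E c) (R'_E V E c) (R_col c) W2 D2"
    and mx2: "\<And>W' D'. trunk_candidate (R_V V E c) (R'_E V E c) (R_col c) W' D' \<Longrightarrow> W2 \<subseteq> W' \<Longrightarrow> D2 \<subseteq> D' \<Longrightarrow> W' = W2 \<and> D' = D2"
    using T2 unfolding trunk_iff by blast+
  have A: "W1 \<subseteq> R_V V E c" "D1 \<subseteq> R'_E V E c" "\<forall>e\<in>D1. e \<subseteq> W1" "\<forall>a\<in>W1. \<forall>b\<in>W1. (a,b) \<in> (rel D1)\<^sup>*"
    "\<forall>z\<in>W1. R_col c z \<noteq> None \<longrightarrow> deg D1 z = 1"
    using c1 unfolding cand_iff by blast+
  have B: "W2 \<subseteq> R_V V E c" "D2 \<subseteq> R'_E V E c" "\<forall>e\<in>D2. e \<subseteq> W2" "\<forall>a\<in>W2. \<forall>b\<in>W2. (a,b) \<in> (rel D2)\<^sup>*"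
    "\<forall>z\<in>W2. R_col c z \<noteq> None \<longrightarrow> deg D2 z = 1"
    using c2 unfolding cand_iff by blast+
  have rm1: "(rel D1)\<^sup>* \<subseteq> (rel (D1 \<union> D2))\<^sup>*" by (rule rel_mono) simp
  have rm2: "(rel D2)\<^sup>* \<subseteq> (rel (D1 \<union> D2))\<^sup>*" by (rule rel_mono) simp
  have "trunk_candidate (R_V V E c) (R'_E V E c) (R_col c) (W1 \<union> W2) (D1 \<union> D2)"
    unfolding cand_iff
  proof (intro conjI ballI impI)
    show "W1 \<union> W2 \<subseteq> R_V V E c" using A(1) B(1) by simp
    show "D1 \<union> D2 \<subseteq> R'_E V E c" using A(2) B(2) by simp
    show "W1 \<union> W2 \<noteq> {}" using z by blast
  next
    fix e assume "e \<in> D1 \<union> D2" then show "e \<subseteq> W1 \<union> W2" using A(3) B(3) by blast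
  next
    fix a b assume a: "a \<in> W1 \<union> W2" and b: "b \<in> W1 \<union> W2"
    have toZ: "(a, z) \<in> (rel (D1 \<union> D2))\<^sup>*" if "a \<in> W1 \<union> W2" for a
      using that A(4) B(4) z rm1 rm2 by blast
    have fromZ: "(z, b) \<in> (rel (D1 \<union> D2))\<^sup>*" if "b \<in> W1 \<union> W2" for b
      using that A(4) B(4) z rm1 rm2 by blast
    show "(a, b) \<in> (rel (D1 \<union> D2))\<^sup>*" using toZ[OF a] fromZ[OF b] by (rule rtrancl_trans)
  next
    fix y assume y: "y \<in> W1 \<union> W2" "R_col c y \<noteq> None"
    have "nb (D1 \<union> D2) y \<noteq> {}"
    proof (cases "y \<in> W1")
      case True
      then have "deg D1 y = 1" using A(5) y(2) by blast
      then have "nb D1 y \<noteq> {}" by (rule deg_one_ne)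
      then show ?thesis unfolding nb_def by blast
    next
      case False
      then have "y \<in> W2" using y by blast
      then have "deg D2 y = 1" using B(5) y(2) by blast
      then have "nb D2 y \<noteq> {}" by (rule deg_one_ne)
      then show ?thesis unfolding nb_def by blast
    qed
    moreover have "D1 \<union> D2 \<subseteq> R'_E V E c" using A(2) B(2) by simp
    ultimately show "deg (D1 \<union> D2) y = 1" using y(2) col_deg_one by blast
  qed
  then have "W1 \<union> W2 = W1 \<and> D1 \<union> D2 = D1" "W1 \<union> W2 = W2 \<and> D1 \<union> D2 = D2"
    by (intro mx1 mx2; simp)+
  then show ?thesis by blast
qed

lemma tk_exists:
  assumes y: "y \<in> nb (R'_E V E c) x"
  shows "\<exists>W D. (W,D) \<in> trunks (R_V V E c) (R'_E V E c) (R_col c) \<and> x \<in> W"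
proof -
  let ?C = "trunk_candidate (R_V V E c) (R'_E V E c) (R_col c)"
  have exy: "{x,y} \<in> R'_E V E c" and yx: "y \<noteq> x" using y by (auto simp: nb_def)
  have xV: "x \<in> R_V V E c" "y \<in> R_V V E c" using exy RE_sub_Pow by auto
  have c0: "?C {x,y} {{x,y}}" unfolding cand_iff
  proof (intro conjI ballI impI)
    show "{x, y} \<subseteq> R_V V E c" using xV by simp
    show "{{x, y}} \<subseteq> R'_E V E c" using exy by simp
  next
    fix a b assume "a \<in> {x,y}" "b \<in> {x,y}"
    moreover have "(x,y) \<in> rel {{x,y}}" "(y,x) \<in> rel {{x,y}}" by (auto simp: rel_def insert_commute)
    ultimately show "(a, b) \<in> (rel {{x, y}})\<^sup>*" by blast
  next
    fix z assume z: "z \<in> {x,y}" "R_col c z \<noteq> None"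
    have "nb {{x,y}} z \<noteq> {}"
    proof (cases "z = x")
      case True then have "y \<in> nb {{x,y}} z" using yx by (simp add: nb_def)
      then show ?thesis by blast
    next
      case False then have "z = y" using z by simp
      then have "x \<in> nb {{x,y}} z" using yx by (auto simp: nb_def insert_commute)
      then show ?thesis by blast
    qed
    moreover have "{{x,y}} \<subseteq> R'_E V E c" using exy by simp
    ultimately show "deg {{x, y}} z = 1" using z(2) col_deg_one by blast
  qed auto
  define S where "S = {p. ?C (fst p) (snd p) \<and> {x,y} \<subseteq> fst p \<and> {{x,y}} \<subseteq> snd p}"
  define mu where "mu p = card (fst p) + card (snd p)" for p :: "(('a set \<times> 'a set set) \<times> 'a) set \<times> (('a set \<times> 'a set set) \<times> 'a) set set"
  have Ssub: "fst p \<subseteq> R_V V E c \<and> snd p \<subseteq> R'_E V E c" if "p \<in> S" for p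
  proof -
    have "?C (fst p) (snd p)" using that by (simp add: S_def)
    from this[unfolded cand_iff] show ?thesis by blast
  qed
  have bound: "mu p < Suc (card (R_V V E c) + card (R'_E V E c))" if "p \<in> S" for p
  proof -
    have "card (fst p) \<le> card (R_V V E c)" using Ssub[OF that] by (intro card_mono[OF finRV]) simp
    moreover have "card (snd p) \<le> card (R'_E V E c)" using Ssub[OF that] by (intro card_mono[OF finRE]) simp
    ultimately show ?thesis by (simp add: mu_def)
  qed
  have p0: "({x,y}, {{x,y}}) \<in> S" using c0 by (simp add: S_def)
  have bound': "\<forall>p. p \<in> S \<longrightarrow> mu p < Suc (card (R_V V E c) + card (R'_E V E c))"
    using bound by blast
  obtain m where m: "m \<in> S" and mmax: "\<forall>p. p \<in> S \<longrightarrow> mu p \<le> mu m"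
    using Lattices_Big.ex_has_greatest_nat[of "\<lambda>p. p \<in> S" "({x,y}, {{x,y}})" mu, OF p0 bound'] by blast
  obtain W D where mWD: "m = (W,D)" by (cases m)
  have "m \<in> S" by fact
  then have cm: "?C W D" and xy: "{x,y} \<subseteq> W" "{{x,y}} \<subseteq> D" unfolding S_def mWD by simp_all
  have "(W,D) \<in> trunks (R_V V E c) (R'_E V E c) (R_col c)" unfolding trunk_iff
  proof (rule conjI)
    show "?C W D" by fact
  next
    show "\<forall>W' D'. ?C W' D' \<and> W \<subseteq> W' \<and> D \<subseteq> D' \<longrightarrow> W' = W \<and> D' = D"
    proof (intro allI impI)
    fix W' D' assume h: "?C W' D' \<and> W \<subseteq> W' \<and> D \<subseteq> D'"
    have WS: "(W',D') \<in> S" unfolding S_def using h xy by auto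
    have le: "mu (W',D') \<le> mu (W,D)" using mmax WS mWD by blast
    have sub': "W' \<subseteq> R_V V E c" "D' \<subseteq> R'_E V E c" using Ssub[OF WS] by simp_all
    have fW': "finite W'" "finite D'" using finite_subset[OF sub'(1) finRV] finite_subset[OF sub'(2) finRE] .
    have hs: "W \<subseteq> W'" "D \<subseteq> D'" using h by blast+
    have "card W \<le> card W'" "card D \<le> card D'" using card_mono[OF fW'(1) hs(1)] card_mono[OF fW'(2) hs(2)] .
    then have "card W = card W'" "card D = card D'" using le by (auto simp: mu_def)
    then show "W' = W \<and> D' = D" using card_subset_eq[OF fW'(1) hs(1)] card_subset_eq[OF fW'(2) hs(2)] by simp
    qed
  qed
  then show ?thesis using xy by blast
qed

lemma acyc_RE: "acyc (R_E V E c)"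
  unfolding acyc_def
proof
  assume "\<exists>zs. 3 \<le> length zs \<and> distinct zs \<and> (\<forall>i<length zs. {zs!i, zs!((i+1) mod length zs)} \<in> R_E V E c)"
  then obtain zs where L: "3 \<le> length zs" and d: "distinct zs"
    and ed: "\<And>i. i < length zs \<Longrightarrow> {zs!i, zs!((i+1) mod length zs)} \<in> R_E V E c" by blast
  define n where "n = length zs"
  have ne: "zs!i \<noteq> zs!((i+1) mod n)" if "i < n" for i
  proof -
    have "(i+1) mod n < n" using that by simp
    moreover have "(i+1) mod n \<noteq> i"
    proof (cases "i + 1 < n")
      case True then show ?thesis by simp
    next
      case False then have "i + 1 = n" using that by simp
      then show ?thesis using L n_def by simp
    qed
    ultimately show ?thesis using nth_eq_iff_index_eq[OF d] that n_def by simp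
  qed
  have P: "fst (zs!((i+1) mod n)) = fst (zs!i) \<and> fst (zs!i) \<in> trunks V E c \<and>
      {snd (zs!i), snd (zs!((i+1) mod n))} \<in> snd (fst (zs!i))" if "i < n" for i
  proof -
    have "{zs!i, zs!((i+1) mod n)} \<in> R_E V E c" using ed[of i] that n_def by simp
    from pair_RE[OF this ne[OF that]] show ?thesis .
  qed
  have F: "fst (zs!i) = fst (zs!0)" if "i < n" for i
    using that
  proof (induction i)
    case 0 then show ?case by simp
  next
    case (Suc i)
    then have "(i+1) mod n = Suc i" by simp
    then show ?case using P[of i] Suc by simp
  qed
  define T where "T = fst (zs!0)"
  have n0: "0 < n" unfolding n_def using L by linarith
  have T: "T \<in> trunks V E c" using P[OF n0] T_def by simp
  define xs where "xs = map snd zs"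
  have "inj_on snd (set zs)"
  proof (rule inj_onI)
    fix p q assume "p \<in> set zs" "q \<in> set zs" "snd p = snd q"
    moreover have "fst p = T" "fst q = T" using F calculation(1,2) T_def n_def by (auto simp: in_set_conv_nth)
    ultimately show "p = q" by (simp add: prod_eq_iff)
  qed
  then have dx: "distinct xs" using d by (simp add: xs_def distinct_map)
  have lx: "length xs = n" by (simp add: xs_def n_def)
  have ex: "{xs!i, xs!((i+1) mod n)} \<in> E" if "i < n" for i
  proof -
    have a: "{snd (zs!i), snd (zs!((i+1) mod n))} \<in> snd (fst (zs!i))" using P[OF that] by blast
    have b: "snd (fst (zs!i)) \<subseteq> E" using tF(2) P[OF that] by blast
    have m: "{snd (zs!i), snd (zs!((i+1) mod n))} \<in> E" by (rule subsetD[OF b a])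
    have "(i+1) mod n < n" using that by simp
    then show ?thesis using that m by (simp add: xs_def n_def)
  qed
  have sx: "set xs \<subseteq> V"
  proof
    fix v assume "v \<in> set xs"
    then obtain i where i: "i < n" "xs!i = v" using lx by (auto simp: in_set_conv_nth)
    have "{xs!i, xs!((i+1) mod n)} \<subseteq> V" using ex[OF i(1)] E_sub by blast
    then show "v \<in> V" using i by simp
  qed
  have "has_cycle V E" unfolding has_cycle_def
    using dx sx ex lx L n_def by (intro exI[of _ xs]) auto
  then show False using nocyc by simp
qed

end



theorem lemma6p2:
  fixes V :: "'a set" and E :: "'a set set" and c :: "'a \<Rightarrow> nat option"
  assumes "pc_forest V E c"
    and "\<forall>(W, D) \<in> trunks (R_V V E c) (R'_E V E c) (R_col c).
           (card {x \<in> W. R_col c x \<noteq> None} = 1 \<and> D \<inter> E_gtgt2 (R'_E V E c) = {})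
         \<or> ({x \<in> W. R_col c x \<noteq> None} = {} \<and> (\<exists>v\<in>W. \<forall>e \<in> E_gtgt2 D. v \<in> e))"
  shows "alice_wins_RCG 3 (R_V V E c) (R'_E V E c) (R_col c)"
proof -
  note pcf = assms(1)
  let ?tk = "trunks (R_V V E c) (R'_E V E c) (R_col c)"
  let ?RE = "R'_E V E c"
  let ?col = "R_col c"
  have hyp: "(card {x \<in> W. ?col x \<noteq> None} = 1 \<and> D \<inter> E_gtgt2 ?RE = {})
         \<or> ({x \<in> W. ?col x \<noteq> None} = {} \<and> (\<exists>v\<in>W. \<forall>e \<in> E_gtgt2 D. v \<in> e))"
    if "(W,D) \<in> ?tk" for W D
    using assms(2) that by fastforce
  have tkD: "D \<subseteq> ?RE" "\<And>e. e \<in> D \<Longrightarrow> e \<subseteq> W" if "(W,D) \<in> ?tk" for W D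
  proof -
    have "trunk_candidate (R_V V E c) ?RE ?col W D" using that trunk_iff by blast
    from this[unfolded cand_iff] show "D \<subseteq> ?RE" "\<And>e. e \<in> D \<Longrightarrow> e \<subseteq> W" by blast+
  qed
  define rt where "rt W D = (if \<exists>x\<in>W. ?col x \<noteq> None then (SOME x. x \<in> W \<and> ?col x \<noteq> None)
      else (SOME v. v \<in> W \<and> (\<forall>e\<in>E_gtgt2 D. v \<in> e)))" for W :: "(('a set \<times> 'a set set) \<times> 'a) set" and D
  define OK where "OK D r p \<longleftrightarrow> (\<forall>x y. y\<in>nb D x \<longrightarrow> p x = Some y \<or> p y = Some x) \<and>
      (\<forall>x y. p x = Some y \<longrightarrow> y \<in> nb D x) \<and> p r = None"
    for D :: "(('a set \<times> 'a set set) \<times> 'a) set set" and r and p :: "('a set \<times> 'a set set) \<times> 'a \<Rightarrow> (('a set \<times> 'a set set) \<times> 'a) option"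
  define pT where "pT W D = (SOME p. OK D (rt W D) p)" for W D
  have pT_ok: "OK D (rt W D) (pT W D)" if T: "(W,D) \<in> ?tk" for W D
  proof -
    have sub: "D \<subseteq> ?RE" using tkD[OF T] by blast
    have fD: "finite D" by (rule finite_subset[OF sub finRE[OF pcf]])
    have two: "\<forall>e\<in>D. \<exists>a b. e = {a,b} \<and> a \<noteq> b" using sub RE_edges[OF pcf] by blast
    have "D \<subseteq> R_E V E c" using sub RE_sub[OF pcf] by blast
    then have ac: "acyc D" by (rule acyc_mono[OF acyc_RE[OF pcf]])
    have "\<exists>p. OK D (rt W D) p" unfolding OK_def by (rule orient[OF fD two ac])
    then show ?thesis unfolding pT_def by (rule someI_ex)
  qed
  define tr where "tr x = (SOME T. T \<in> ?tk \<and> x \<in> fst T)" for x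
  define par where "par x = (if \<exists>T\<in>?tk. x \<in> fst T then pT (fst (tr x)) (snd (tr x)) x else None)" for x
  have tr_eq: "tr x = (W,D)" if T: "(W,D) \<in> ?tk" and x: "x \<in> W" for W D x
  proof -
    have "\<exists>T. T \<in> ?tk \<and> x \<in> fst T" using T x by (intro exI[of _ "(W,D)"]) simp
    then have h: "tr x \<in> ?tk \<and> x \<in> fst (tr x)" unfolding tr_def by (rule someI_ex)
    then have "(fst (tr x), snd (tr x)) \<in> ?tk" by simp
    from tk_uniq[OF pcf this T _ x] h show ?thesis by (simp add: prod_eq_iff)
  qed
  have par_eq: "par x = pT W D x" if T: "(W,D) \<in> ?tk" and x: "x \<in> W" for W D x
  proof -
    have "\<exists>T\<in>?tk. x \<in> fst T" using T x by (intro bexI[of _ "(W,D)"]) simp_all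
    then show ?thesis unfolding par_def using tr_eq[OF T x] by simp
  qed
  have nb_eq: "nb D x = nb ?RE x" if T: "(W,D) \<in> ?tk" and x: "x \<in> W" for W D x
  proof
    show "nb D x \<subseteq> nb ?RE x" using tkD(1)[OF T] unfolding nb_def by blast
    show "nb ?RE x \<subseteq> nb D x"
    proof
      fix y assume y: "y \<in> nb ?RE x"
      then have "{x,y} \<in> D" using tk_ext[OF pcf T x y] by blast
      then show "y \<in> nb D x" using y unfolding nb_def by blast
    qed
  qed
  have gmI: "gm (R_V V E c) ?RE par" unfolding gm_def
  proof (intro conjI allI impI)
    show "finite (R_V V E c)" by (rule finRV[OF pcf])
    show "\<forall>e\<in>?RE. \<exists>x y. e = {x, y} \<and> x \<noteq> y \<and> x \<in> R_V V E c \<and> y \<in> R_V V E c"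
      by (rule RE_edges[OF pcf])
  next
    fix x y assume y: "y \<in> nb ?RE x"
    obtain W D where T: "(W,D) \<in> ?tk" and x: "x \<in> W" using tk_exists[OF pcf y] by blast
    have yW: "y \<in> W" using tk_ext[OF pcf T x y] by blast
    have "y \<in> nb D x" using y nb_eq[OF T x] by simp
    then have "pT W D x = Some y \<or> pT W D y = Some x" using pT_ok[OF T] unfolding OK_def by blast
    then show "par x = Some y \<or> par y = Some x" using par_eq[OF T x] par_eq[OF T yW] by simp
  next
    fix x y assume xy: "par x = Some y"
    then have "\<exists>T\<in>?tk. x \<in> fst T"
    proof (rule contrapos_pp)
      assume "\<not> (\<exists>T\<in>?tk. x \<in> fst T)"
      then show "par x \<noteq> Some y" unfolding par_def by simp
    qed
    then obtain T0 where T0: "T0 \<in> ?tk" "x \<in> fst T0" by blast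
    obtain W D where WD: "T0 = (W,D)" by (cases T0)
    have T: "(W,D) \<in> ?tk" and x: "x \<in> W" using T0 WD by simp_all
    have "pT W D x = Some y" using xy par_eq[OF T x] by simp
    then have "y \<in> nb D x" using pT_ok[OF T] unfolding OK_def by blast
    then show "y \<in> nb ?RE x" using nb_eq[OF T x] by simp
  next
    fix u g assume ug: "par u = Some g" "3 \<le> deg ?RE u" "3 \<le> deg ?RE g"
    from ug(1) have "\<exists>T\<in>?tk. u \<in> fst T"
    proof (rule contrapos_pp)
      assume "\<not> (\<exists>T\<in>?tk. u \<in> fst T)"
      then show "par u \<noteq> Some g" unfolding par_def by simp
    qed
    then obtain T0 where T0: "T0 \<in> ?tk" "u \<in> fst T0" by blast
    obtain W D where WD: "T0 = (W,D)" by (cases T0)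
    have T: "(W,D) \<in> ?tk" and u: "u \<in> W" using T0 WD by simp_all
    have pu: "pT W D u = Some g" using ug(1) par_eq[OF T u] by simp
    then have gn: "g \<in> nb D u" using pT_ok[OF T] unfolding OK_def by blast
    then have eD: "{u,g} \<in> D" by (simp add: nb_def)
    then have gW: "g \<in> W" using tkD(2)[OF T] by blast
    have eRE: "{u,g} \<in> ?RE" using eD tkD(1)[OF T] by blast
    have dD: "deg D u = deg ?RE u" "deg D g = deg ?RE g"
      using nb_eq[OF T u] nb_eq[OF T gW] by (simp_all add: deg_nb)
    show "par g = None"
    proof (cases "card {x \<in> W. ?col x \<noteq> None} = 1 \<and> D \<inter> E_gtgt2 ?RE = {}")
      case True
      have "\<forall>x\<in>{u,g}. deg ?RE x > 2" using ug(2,3) by simp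
      then have "{u,g} \<in> E_gtgt2 ?RE" unfolding E_gtgt2_def using eRE by simp
      then show ?thesis using True eD by blast
    next
      case False
      then have h: "{x \<in> W. ?col x \<noteq> None} = {}" "\<exists>v\<in>W. \<forall>e \<in> E_gtgt2 D. v \<in> e" using hyp[OF T] by blast+
      then have "\<not> (\<exists>x\<in>W. ?col x \<noteq> None)" by blast
      then have rteq: "rt W D = (SOME v. v \<in> W \<and> (\<forall>e\<in>E_gtgt2 D. v \<in> e))" by (simp add: rt_def)
      have exv: "\<exists>v. v \<in> W \<and> (\<forall>e\<in>E_gtgt2 D. v \<in> e)" using h(2) by blast
      have "(SOME v. v \<in> W \<and> (\<forall>e\<in>E_gtgt2 D. v \<in> e)) \<in> W \<and> (\<forall>e\<in>E_gtgt2 D. (SOME v. v \<in> W \<and> (\<forall>e\<in>E_gtgt2 D. v \<in> e)) \<in> e)"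
        by (rule someI_ex[OF exv])
      then have rtc: "\<forall>e\<in>E_gtgt2 D. rt W D \<in> e" using rteq by simp
      have "deg D u > 2" "deg D g > 2" using dD ug(2,3) by simp_all
      then have "\<forall>x\<in>{u,g}. deg D x > 2" by simp
      then have "{u,g} \<in> E_gtgt2 D" unfolding E_gtgt2_def using eD by simp
      with rtc have "rt W D \<in> {u,g}" by (rule bspec)
      then have "rt W D = u \<or> rt W D = g" by simp
      moreover have "pT W D (rt W D) = None" using pT_ok[OF T] unfolding OK_def by blast
      ultimately have "rt W D = g" using pu by auto
      then have "pT W D g = None" using \<open>pT W D (rt W D) = None\<close> by simp
      then show ?thesis using par_eq[OF T gW] by simp
    qed
  qed
  have invI: "Inv ?RE par ?col" unfolding Inv_def InvAt_def
  proof (intro allI impI)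
    fix u assume cu: "?col u = None" and du: "3 \<le> deg ?RE u"
    have "nb ?RE u \<noteq> {}" using du by (auto simp: deg_nb)
    then obtain y0 where "y0 \<in> nb ?RE u" by blast
    then obtain W D where T: "(W,D) \<in> ?tk" and u: "u \<in> W" using tk_exists[OF pcf] by blast
    have nbW: "y \<in> W" if "y \<in> nb ?RE u" for y using tk_ext[OF pcf T u that] by blast
    show "(\<forall>y\<in>nb ?RE u. \<forall>z\<in>nb ?RE u. ?col y \<noteq> None \<longrightarrow> ?col z \<noteq> None \<longrightarrow> ?col y = ?col z) \<and>
        (\<forall>y\<in>nb ?RE u. ?col y \<noteq> None \<longrightarrow> par u \<noteq> Some y \<longrightarrow> (\<exists>p. par u = Some p \<and> ?col p \<noteq> None))"
    proof (cases "card {x \<in> W. ?col x \<noteq> None} = 1 \<and> D \<inter> E_gtgt2 ?RE = {}")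
      case False
      then have h: "{x \<in> W. ?col x \<noteq> None} = {}" using hyp[OF T] by blast
      then have "\<forall>y\<in>nb ?RE u. ?col y = None" using nbW by blast
      then show ?thesis by simp
    next
      case True
      then obtain x0 where x0: "{x \<in> W. ?col x \<noteq> None} = {x0}" by (meson card_1_singletonE)
      have ex: "\<exists>x\<in>W. ?col x \<noteq> None" using x0 by blast
      have rteq: "rt W D = (SOME x. x \<in> W \<and> ?col x \<noteq> None)" using ex by (simp add: rt_def)
      have exv: "\<exists>x. x \<in> W \<and> ?col x \<noteq> None" using ex by blast
      have "(SOME x. x \<in> W \<and> ?col x \<noteq> None) \<in> W \<and> ?col (SOME x. x \<in> W \<and> ?col x \<noteq> None) \<noteq> None"
        by (rule someI_ex[OF exv])
      then have "rt W D \<in> {x \<in> W. ?col x \<noteq> None}" using rteq by simp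
      then have rx: "rt W D = x0" using x0 by blast
      have only: "y = x0" if "y \<in> nb ?RE u" "?col y \<noteq> None" for y
        using nbW[OF that(1)] that(2) x0 by blast
      have p0: "pT W D x0 = None" using pT_ok[OF T] rx unfolding OK_def by blast
      show ?thesis
      proof (intro conjI ballI impI)
        fix y z assume "y \<in> nb ?RE u" "z \<in> nb ?RE u" "?col y \<noteq> None" "?col z \<noteq> None"
        then have "y = x0" "z = x0" using only by blast+
        then show "?col y = ?col z" by simp
      next
        fix y assume y: "y \<in> nb ?RE u" "?col y \<noteq> None" "par u \<noteq> Some y"
        have yx: "y = x0" using only y by blast
        have "y \<in> nb D u" using y(1) nb_eq[OF T u] by simp
        then have "pT W D u = Some y \<or> pT W D y = Some u" using pT_ok[OF T] unfolding OK_def by blast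
        then have "pT W D u = Some y" using p0 yx by simp
        then show "\<exists>p. par u = Some p \<and> ?col p \<noteq> None" using y(3) par_eq[OF T u] by simp
      qed
    qed
  qed
  have "win_bob 3 (R_V V E c) ?RE ?col" by (rule gm.main[OF gmI invI])
  then show ?thesis by (simp add: alice_wins_RCG_def)
qed


end
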